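(* For every finite set $\textsc{prop}$ of propositional variables and every $\mathrm{PL}_{\{\oplus_3\}}[\textsc{prop}]$-formula $\phi$, every set of labeled examples that uniquely characterizes $\phi$ with respect to $\mathrm{PL}_{\{\oplus_3\}}[\textsc{prop}]$ contains at least $|\textsc{prop}|-1$ examples.
   Context: $\oplus_3$ is the ternary Boolean function $x\oplus y\oplus z$ (exclusive or). $\mathrm{PL}_{\{\oplus_3\}}[\textsc{prop}]$ is the set of formulas generated by $\phi::=x\mid\oplus_3(\phi_1,\phi_2,\phi_3)$ with $x\in\textsc{prop}$, evaluated under truth assignments $V:\textsc{prop}\to\{0,1\}$ in the obvious way; two formulas are equivalent if they agree under all such assignments. A labeled example is a pair $(V,\mathrm{lab})$ with $\mathrm{lab}\in\{0,1\}$; $\phi$ fits it if $\phi$ evaluates to $\mathrm{lab}$ under $V$. A set $E$ of labeled examples uniquely characterizes $\phi$ with respect to $\mathrm{PL}_{\{\oplus_3\}}[\textsc{prop}]$ if $\phi$ fits all of $E$ and every formula of $\mathrm{PL}_{\{\oplus_3\}}[\textsc{prop}]$ fitting all of $E$ is equivalent to $\phi$. *)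

theory Defs
  imports Main
begin

datatype 'a xform = Var 'a | Xor3 "'a xform" "'a xform" "'a xform"

fun vars :: "'a xform \<Rightarrow> 'a set" where
  "vars (Var x) = {x}"
| "vars (Xor3 a b c) = vars a \<union> vars b \<union> vars c"

text \<open>A truth assignment over prop is represented by the set of variables it makes true
  (a subset of prop).\<close>
fun eval :: "'a set \<Rightarrow> 'a xform \<Rightarrow> bool" where
  "eval V (Var x) = (x \<in> V)"
| "eval V (Xor3 a b c) = (eval V a \<noteq> (eval V b \<noteq> eval V c))"

definition is_formula :: "'a set \<Rightarrow> 'a xform \<Rightarrow> bool" where
  "is_formula P \<phi> \<longleftrightarrow> vars \<phi> \<subseteq> P"

definition is_example :: "'a set \<Rightarrow> ('a set \<times> bool) \<Rightarrow> bool" where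
  "is_example P e \<longleftrightarrow> fst e \<subseteq> P"

definition fits :: "'a xform \<Rightarrow> ('a set \<times> bool) \<Rightarrow> bool" where
  "fits \<phi> e \<longleftrightarrow> eval (fst e) \<phi> = snd e"

definition equiv_on :: "'a set \<Rightarrow> 'a xform \<Rightarrow> 'a xform \<Rightarrow> bool" where
  "equiv_on P \<phi> \<psi> \<longleftrightarrow> (\<forall>V. V \<subseteq> P \<longrightarrow> eval V \<phi> = eval V \<psi>)"

definition uniquely_characterizes ::
    "'a set \<Rightarrow> ('a set \<times> bool) set \<Rightarrow> 'a xform \<Rightarrow> bool" where
  "uniquely_characterizes P E \<phi> \<longleftrightarrow>
     (\<forall>e\<in>E. fits \<phi> e) \<and>
     (\<forall>\<psi>. is_formula P \<psi> \<and> (\<forall>e\<in>E. fits \<psi> e) \<longrightarrow> equiv_on P \<psi> \<phi>)"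

end

theory Submission
  imports Defs
begin

lemma card_symdiff_parity:
  assumes "finite X" "finite Y"
  shows "even (card ((X - Y) \<union> (Y - X))) \<longleftrightarrow> (even (card X) \<longleftrightarrow> even (card Y))"
proof -
  have 1: "card X = card (X - Y) + card (X \<inter> Y)"
  proof -
    have "X = (X - Y) \<union> (X \<inter> Y)" by auto
    hence "card X = card ((X - Y) \<union> (X \<inter> Y))" by simp
    also have "\<dots> = card (X - Y) + card (X \<inter> Y)" using assms by (intro card_Un_disjoint) auto
    finally show ?thesis .
  qed
  have 2: "card Y = card (Y - X) + card (X \<inter> Y)"
  proof -
    have "Y = (Y - X) \<union> (X \<inter> Y)" by auto
    hence "card Y = card ((Y - X) \<union> (X \<inter> Y))" by simp
    also have "\<dots> = card (Y - X) + card (X \<inter> Y)" using assms by (intro card_Un_disjoint) auto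
    finally show ?thesis .
  qed
  have 3: "card ((X - Y) \<union> (Y - X)) = card (X - Y) + card (Y - X)"
    using assms by (intro card_Un_disjoint) auto
  show ?thesis using 1 2 3 by auto
qed

lemma build_formula:
  "finite D \<Longrightarrow> even (card D) \<Longrightarrow> D \<subseteq> P \<Longrightarrow> vars \<phi> \<subseteq> P \<Longrightarrow>
   \<exists>\<psi>. vars \<psi> \<subseteq> P \<and> (\<forall>V. eval V \<psi> = (eval V \<phi> \<noteq> odd (card (D \<inter> V))))"
proof (induction "card D" arbitrary: D rule: less_induct)
  case less
  show ?case
  proof (cases "D = {}")
    case True
    then show ?thesis using less.prems by auto
  next
    case False
    then obtain a where a: "a \<in> D" by auto
    have "card D \<noteq> 1" using less.prems by auto
    have "D - {a} \<noteq> {}"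
    proof
      assume "D - {a} = {}"
      hence "D = {a}" using a by auto
      thus False using \<open>card D \<noteq> 1\<close> by simp
    qed
    then obtain b where b: "b \<in> D - {a}" by blast
    define D' where "D' = D - {a, b}"
    have fin: "finite D'" using less.prems D'_def by auto
    have "D = insert a (insert b D')" "a \<notin> insert b D'" "b \<notin> D'" using a b unfolding D'_def by auto
    hence cD: "card D = card D' + 2" using fin by simp
    have "\<exists>\<psi>. vars \<psi> \<subseteq> P \<and> (\<forall>V. eval V \<psi> = (eval V \<phi> \<noteq> odd (card (D' \<inter> V))))"
      using less.hyps[of D'] cD fin less.prems D'_def by auto
    then obtain \<psi> where psi: "vars \<psi> \<subseteq> P" "\<forall>V. eval V \<psi> = (eval V \<phi> \<noteq> odd (card (D' \<inter> V)))"
      by blast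
    have key: "odd (card (D \<inter> V)) = (odd (card (D' \<inter> V)) \<noteq> ((a \<in> V) \<noteq> (b \<in> V)))" for V
    proof -
      have eq: "D \<inter> V = (D' \<inter> V) \<union> ({a} \<inter> V) \<union> ({b} \<inter> V)" using a b D'_def by auto
      have "card (D \<inter> V) = card (D' \<inter> V) + card ({a} \<inter> V) + card ({b} \<inter> V)"
        unfolding eq using fin a b D'_def
        by (subst card_Un_disjoint; auto simp: card_Un_disjoint)+
      moreover have "card ({a} \<inter> V) = (if a \<in> V then 1 else 0)" by auto
      moreover have "card ({b} \<inter> V) = (if b \<in> V then 1 else 0)" by auto
      ultimately show ?thesis by auto
    qed
    show ?thesis
      apply (rule exI[of _ "Xor3 \<psi> (Var a) (Var b)"])
      using psi key a b less.prems by auto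
  qed
qed

theorem theoremA3:
  fixes P :: "'a set" and \<phi> :: "'a xform" and E :: "('a set \<times> bool) set"
  assumes "finite P"
    and "is_formula P \<phi>"
    and "\<forall>e\<in>E. is_example P e"
    and "uniquely_characterizes P E \<phi>"
  shows "infinite E \<or> card P - 1 \<le> card E"
proof (rule ccontr)
  assume "\<not> ?thesis"
  hence finE: "finite E" and lt: "card E + 2 \<le> card P" by auto
  define A where "A = fst ` E \<union> {P}"
  have finA: "finite A" using finE A_def by auto
  have "card A \<le> card (fst ` E) + card {P}" unfolding A_def by (rule card_Un_le)
  moreover have "card (fst ` E) \<le> card E" using finE by (rule card_image_le)
  ultimately have cA: "card A \<le> card E + 1" by simp
  define f where "f D = {V \<in> A. even (card (D \<inter> V))}" for D
  have "\<not> inj_on f (Pow P)"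
  proof
    assume inj: "inj_on f (Pow P)"
    have "card (Pow P) \<le> card (Pow A)"
      by (rule card_inj_on_le[OF inj]) (auto simp: f_def finA)
    hence "(2::nat) ^ card P \<le> 2 ^ card A" using assms(1) finA by (simp add: card_Pow)
    hence "card P \<le> card A" by simp
    thus False using cA lt by simp
  qed
  then obtain D1 D2 where D: "D1 \<subseteq> P" "D2 \<subseteq> P" "D1 \<noteq> D2" "f D1 = f D2"
    unfolding inj_on_def by auto
  define D where "D = (D1 - D2) \<union> (D2 - D1)"
  have DP: "D \<subseteq> P" using D D_def by auto
  have finD: "finite D" "D \<subseteq> P" using DP assms(1) finite_subset by auto
  have Dne: "D \<noteq> {}" using D D_def by auto
  have par: "even (card (D \<inter> V))" if "V \<in> A" for V
  proof -
    have "D \<inter> V = ((D1 \<inter> V) - (D2 \<inter> V)) \<union> ((D2 \<inter> V) - (D1 \<inter> V))" unfolding D_def by auto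
    moreover have "(V \<in> f D1) = (V \<in> f D2)" using D by simp
    ultimately show ?thesis using card_symdiff_parity[of "D1 \<inter> V" "D2 \<inter> V"] that
      finite_subset[OF D(1) assms(1)] finite_subset[OF D(2) assms(1)] unfolding f_def by auto
  qed
  have evD: "even (card D)" using par[of P] finD unfolding A_def by (simp add: Int_absorb2)
  obtain \<psi> where psi: "vars \<psi> \<subseteq> P" "\<forall>V. eval V \<psi> = (eval V \<phi> \<noteq> odd (card (D \<inter> V)))"
    using build_formula[OF finD(1) evD finD(2)] assms(2) unfolding is_formula_def by blast
  have fitsE: "\<forall>e\<in>E. fits \<psi> e"
  proof
    fix e assume e: "e \<in> E"
    hence "fst e \<in> A" unfolding A_def by auto
    thus "fits \<psi> e" using par psi(2) e assms(4) unfolding uniquely_characterizes_def fits_def by auto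
  qed
  hence "equiv_on P \<psi> \<phi>" using assms(4) psi(1) unfolding uniquely_characterizes_def is_formula_def by auto
  moreover obtain d where d: "d \<in> D" using Dne by auto
  moreover have "D \<inter> {d} = {d}" using d by auto
  ultimately have "eval {d} \<psi> = eval {d} \<phi>" using finD(2) unfolding equiv_on_def by auto
  moreover have "odd (card (D \<inter> {d}))" using \<open>D \<inter> {d} = {d}\<close> by simp
  ultimately show False using psi(2) by auto
qed

end
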